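(* Let $V$ be a finite set, $\mu\colon\binom V2\to\mathbb{Z}_+$, and suppose $V=V_1\sqcup V_2$ with $V_1,V_2$ nonempty and $\mu(e)=1$ for every edge $e$ with one endpoint in $V_1$ and the other in $V_2$. Then $(\Delta_V)_\mu\cong(\Delta_{V_1})_{\mu_1}\ast(\Delta_{V_2})_{\mu_2}$, where $\mu_1,\mu_2$ are the restrictions of $\mu$ to $\binom{V_1}{2}$ and $\binom{V_2}{2}$.
   Context: $\Delta_V$ is the full simplex on $V$, viewed as the simplicial poset of nonempty subsets of $V$. Edge inflation: for $\mu\colon\binom V2\to\mathbb{Z}_+$, $(\Delta_V)_\mu$ is the poset of pairs $(I,c_I)$ with $\varnothing\neq I\subseteq V$ and $c_I\colon\binom I2\to\mathbb{Z}_+$, $c_I(e)\in\{1,\dots,\mu(e)\}$, ordered by $(I,c_I)<(J,c_J)$ iff $I\subsetneq J$ and $c_I=c_J|_{\binom I2}$. The join $K_1\ast K_2$ of simplicial posets is the simplicial poset whose simplices are $J_1\ast J_2$ with $J_i\in K_i$ or empty (not both empty), ordered componentwise. *)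

theory Defs
  imports Main
begin

definition edges :: "'a set \<Rightarrow> 'a set set" where
  "edges I = {e. e \<subseteq> I \<and> card e = 2}"

text \<open>Edge inflation of the full simplex on V: pairs (I, c_I) with I a nonempty
  subset of V and c_I a colouring of the edges of I with c_I(e) in {1..mu e}.
  c_I is stored as a total function that is 0 outside the edges of I.\<close>

definition inflation :: "'a set \<Rightarrow> ('a set \<Rightarrow> nat) \<Rightarrow> ('a set \<times> ('a set \<Rightarrow> nat)) set" where
  "inflation V \<mu> = {(I, c). I \<noteq> {} \<and> I \<subseteq> V \<and>
      (\<forall>e\<in>edges I. 1 \<le> c e \<and> c e \<le> \<mu> e) \<and> (\<forall>e. e \<notin> edges I \<longrightarrow> c e = 0)}"

text \<open>(I,c) \<le> (J,d) iff I \<subseteq> J and c is the restriction of d to the edges of I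
  (the reflexive closure of the strict order of the paper).\<close>

definition inflation_le :: "('a set \<times> ('a set \<Rightarrow> nat)) \<Rightarrow> ('a set \<times> ('a set \<Rightarrow> nat)) \<Rightarrow> bool" where
  "inflation_le x y = (fst x \<subseteq> fst y \<and> (\<forall>e\<in>edges (fst x). snd x e = snd y e))"

text \<open>Join of posets: pairs (J1, J2) with each Ji an element of Ki or empty (None),
  not both empty, ordered componentwise (None below everything).\<close>

definition opt_le :: "('b \<Rightarrow> 'b \<Rightarrow> bool) \<Rightarrow> 'b option \<Rightarrow> 'b option \<Rightarrow> bool" where
  "opt_le le x y = (case (x, y) of
      (None, _) \<Rightarrow> True
    | (Some _, None) \<Rightarrow> False
    | (Some a, Some b) \<Rightarrow> le a b)"

definition join_carrier :: "'b set \<Rightarrow> 'c set \<Rightarrow> ('b option \<times> 'c option) set" where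
  "join_carrier K1 K2 = {(x, y). (x = None \<or> the x \<in> K1) \<and> (y = None \<or> the y \<in> K2)
      \<and> \<not> (x = None \<and> y = None)}"

definition join_le :: "('b \<Rightarrow> 'b \<Rightarrow> bool) \<Rightarrow> ('c \<Rightarrow> 'c \<Rightarrow> bool) \<Rightarrow>
    ('b option \<times> 'c option) \<Rightarrow> ('b option \<times> 'c option) \<Rightarrow> bool" where
  "join_le le1 le2 p q = (opt_le le1 (fst p) (fst q) \<and> opt_le le2 (snd p) (snd q))"

definition poset_iso :: "'b set \<Rightarrow> ('b \<Rightarrow> 'b \<Rightarrow> bool) \<Rightarrow> 'c set \<Rightarrow> ('c \<Rightarrow> 'c \<Rightarrow> bool) \<Rightarrow> bool" where
  "poset_iso A leA B leB = (\<exists>f. bij_betw f A B \<and>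
      (\<forall>x\<in>A. \<forall>y\<in>A. leA x y \<longleftrightarrow> leB (f x) (f y)))"

definition restrict_mult :: "('a set \<Rightarrow> nat) \<Rightarrow> 'a set \<Rightarrow> ('a set \<Rightarrow> nat)" where
  "restrict_mult \<mu> W = (\<lambda>e. if e \<in> edges W then \<mu> e else 0)"

end

theory Submission
  imports Defs
begin

definition part :: "'a set \<Rightarrow> ('a set \<times> ('a set \<Rightarrow> nat)) \<Rightarrow> ('a set \<times> ('a set \<Rightarrow> nat)) option" where
  "part W p = (if fst p \<inter> W = {} then None
     else Some (fst p \<inter> W, \<lambda>e. if e \<in> edges (fst p \<inter> W) then snd p e else 0))"

definition oI :: "('a set \<times> ('a set \<Rightarrow> nat)) option \<Rightarrow> 'a set" where
  "oI x = (case x of None \<Rightarrow> {} | Some p \<Rightarrow> fst p)"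

definition oC :: "('a set \<times> ('a set \<Rightarrow> nat)) option \<Rightarrow> 'a set \<Rightarrow> nat" where
  "oC x = (case x of None \<Rightarrow> (\<lambda>_. 0) | Some p \<Rightarrow> snd p)"

definition glue :: "('a set \<times> ('a set \<Rightarrow> nat)) option \<times> ('a set \<times> ('a set \<Rightarrow> nat)) option
   \<Rightarrow> ('a set \<times> ('a set \<Rightarrow> nat))" where
  "glue q = (oI (fst q) \<union> oI (snd q), \<lambda>e. if e \<in> edges (oI (fst q)) then oC (fst q) e
      else if e \<in> edges (oI (snd q)) then oC (snd q) e
      else if e \<in> edges (oI (fst q) \<union> oI (snd q)) then 1 else 0)"

lemma edges_Int: "e \<in> edges (I \<inter> W) \<longleftrightarrow> e \<in> edges I \<and> e \<subseteq> W"
  by (auto simp: edges_def)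

lemma edges_mono: "I \<subseteq> J \<Longrightarrow> e \<in> edges I \<Longrightarrow> e \<in> edges J"
  by (auto simp: edges_def)

lemma edges_empty[simp]: "edges {} = {}"
  by (auto simp: edges_def)

lemma edge_cases:
  assumes "e \<in> edges I" "I \<subseteq> V1 \<union> V2"
  shows "e \<subseteq> V1 \<or> e \<subseteq> V2 \<or> (\<exists>u\<in>V1. \<exists>v\<in>V2. e = {u, v})"
proof -
  from assms(1) obtain a b where e: "e = {a,b}" "a \<noteq> b" "e \<subseteq> I"
    by (auto simp: edges_def card_2_iff)
  then show ?thesis using assms(2) by (auto simp: insert_commute)
qed


lemma oI_part[simp]: "oI (part W p) = fst p \<inter> W"
  by (auto simp: oI_def part_def)

lemma oC_part: "oC (part W p) = (\<lambda>e. if e \<in> edges (fst p \<inter> W) then snd p e else 0)"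
  by (auto simp: oC_def part_def fun_eq_iff)

lemma part_in:
  assumes "(I, c) \<in> inflation V \<mu>" "I \<inter> W \<noteq> {}"
  shows "the (part W (I, c)) \<in> inflation W (restrict_mult \<mu> W)"
  using assms by (auto simp: part_def inflation_def restrict_mult_def edges_Int edges_def)

lemma part_glue:
  assumes "x = None \<or> the x \<in> inflation W \<nu>" "fst p \<inter> W = oI x"
    "\<forall>e\<in>edges (oI x). snd p e = oC x e"
  shows "part W p = x"
proof (cases x)
  case None
  then show ?thesis using assms by (simp add: part_def oI_def)
next
  case (Some a)
  obtain J d where a: "a = (J, d)" by (cases a)
  have "J \<noteq> {}" "\<forall>e. e \<notin> edges J \<longrightarrow> d e = 0"
    using assms(1) Some a by (auto simp: inflation_def)
  then show ?thesis using assms Some a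
    by (auto simp: part_def oI_def oC_def fun_eq_iff)
qed

lemma opt_le_part:
  "opt_le inflation_le (part W p) (part W p') \<longleftrightarrow>
     (fst p \<inter> W \<subseteq> fst p' \<inter> W \<and> (\<forall>e\<in>edges (fst p \<inter> W). snd p e = snd p' e))"
proof (cases "fst p \<inter> W = {}")
  case True
  then show ?thesis by (simp add: part_def opt_le_def)
next
  case F: False
  show ?thesis
  proof (cases "fst p' \<inter> W = {}")
    case True
    then show ?thesis using F by (auto simp: part_def opt_le_def)
  next
    case False
    have m: "e \<in> edges (fst p' \<inter> W)" if "fst p \<inter> W \<subseteq> fst p'" "e \<in> edges (fst p \<inter> W)" for e
      using that by (auto simp: edges_def)
    show ?thesis using F False m
      by (auto simp: part_def opt_le_def inflation_le_def)
  qed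
qed

lemma infl_bound:
  assumes "(J, d) \<in> inflation W (restrict_mult \<mu> W)" "e \<in> edges J"
  shows "1 \<le> d e \<and> d e \<le> \<mu> e"
proof -
  have "J \<subseteq> W" using assms by (auto simp: inflation_def)
  then have "e \<in> edges W" using assms(2) by (auto simp: edges_def)
  then show ?thesis using assms by (auto simp: inflation_def restrict_mult_def)
qed

theorem proposition4p9:
  fixes V V1 V2 :: "'a set" and \<mu> :: "'a set \<Rightarrow> nat"
  assumes "finite V"
    and "\<forall>e\<in>edges V. 1 \<le> \<mu> e"
    and "V = V1 \<union> V2" and "V1 \<inter> V2 = {}"
    and "V1 \<noteq> {}" and "V2 \<noteq> {}"
    and "\<forall>u\<in>V1. \<forall>v\<in>V2. \<mu> {u, v} = 1"
  shows "poset_iso (inflation V \<mu>) inflation_le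
           (join_carrier (inflation V1 (restrict_mult \<mu> V1)) (inflation V2 (restrict_mult \<mu> V2)))
           (join_le inflation_le inflation_le)"
proof -
  define A where "A = inflation V \<mu>"
  define B where "B = join_carrier (inflation V1 (restrict_mult \<mu> V1)) (inflation V2 (restrict_mult \<mu> V2))"
  define f where "f = (\<lambda>p. (part V1 p, part V2 p))"
  have cross: "c e = 1" if "(I, c) \<in> A" "e \<in> edges I" "u \<in> V1" "v \<in> V2" "e = {u, v}" for I c e u v
  proof -
    have "1 \<le> c e" "c e \<le> \<mu> e" using that(1,2) by (auto simp: A_def inflation_def)
    moreover have "\<mu> e = 1" using assms(7) that by auto
    ultimately show ?thesis by simp
  qed
  have fA: "f p \<in> B" if "p \<in> A" for p
  proof -
    obtain I c where p: "p = (I, c)" by (cases p)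
    have "I \<noteq> {}" "I \<subseteq> V" using that p by (auto simp: A_def inflation_def)
    then have "\<not> (I \<inter> V1 = {} \<and> I \<inter> V2 = {})" using assms(3) by auto
    then show ?thesis using part_in[of I c V \<mu>] that p
      by (auto simp: f_def B_def A_def join_carrier_def part_def)
  qed
  have oIsub1: "oI (fst q) \<subseteq> V1" and oIsub2: "oI (snd q) \<subseteq> V2" if "q \<in> B" for q
    using that by (auto simp: B_def join_carrier_def oI_def inflation_def split: option.splits)
  have gB: "glue q \<in> A" if "q \<in> B" for q
  proof -
    let ?I1 = "oI (fst q)" and ?I2 = "oI (snd q)"
    have ne: "?I1 \<union> ?I2 \<noteq> {}"
      using that by (auto simp: B_def join_carrier_def oI_def inflation_def split: option.splits)
    have c1: "1 \<le> oC (fst q) e \<and> oC (fst q) e \<le> \<mu> e" if "e \<in> edges ?I1" for e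
      using \<open>q \<in> B\<close> that infl_bound[of "fst (the (fst q))" "snd (the (fst q))"]
      by (auto simp: B_def join_carrier_def oI_def oC_def split: option.splits)
    have c2: "1 \<le> oC (snd q) e \<and> oC (snd q) e \<le> \<mu> e" if "e \<in> edges ?I2" for e
      using \<open>q \<in> B\<close> that infl_bound[of "fst (the (snd q))" "snd (the (snd q))"]
      by (auto simp: B_def join_carrier_def oI_def oC_def split: option.splits)
    have sub: "?I1 \<union> ?I2 \<subseteq> V" using oIsub1 oIsub2 that assms(3) by blast
    have c3: "1 \<le> \<mu> e" if "e \<in> edges (?I1 \<union> ?I2)" for e
      using assms(2) edges_mono[OF sub that] by blast
    have e1: "edges ?I1 \<subseteq> edges (?I1 \<union> ?I2)" "edges ?I2 \<subseteq> edges (?I1 \<union> ?I2)"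
      by (auto intro: edges_mono)
    show ?thesis unfolding A_def inflation_def glue_def
      using ne sub c1 c2 c3 e1 by auto
  qed
  have gf: "glue (f p) = p" if "p \<in> A" for p
  proof -
    obtain I c where p: "p = (I, c)" by (cases p)
    have IV: "I \<subseteq> V1 \<union> V2" using that p assms(3) by (auto simp: A_def inflation_def)
    have I: "I \<inter> V1 \<union> I \<inter> V2 = I" using IV by auto
    have z: "c e = 0" if "e \<notin> edges I" for e using \<open>p \<in> A\<close> p that by (auto simp: A_def inflation_def)
    have "snd (glue (f p)) e = c e" for e
    proof -
      consider "e \<in> edges (I \<inter> V1)" | "e \<in> edges (I \<inter> V2)" | "e \<notin> edges I"
        | u v where "e \<in> edges I" "u \<in> V1" "v \<in> V2" "e = {u, v}"
        using edge_cases[OF _ IV, of e] by (auto simp: edges_Int)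
      then show ?thesis
      proof cases
        case 4
        then have "e \<notin> edges (I \<inter> V1)" "e \<notin> edges (I \<inter> V2)" using assms(4)
          by (auto simp: edges_Int)
        then show ?thesis using 4 cross[of I c e u v] \<open>p \<in> A\<close> p I
          by (simp add: glue_def f_def oC_part)
      qed (use z I p in \<open>auto simp: glue_def f_def oC_part edges_Int\<close>)
    qed
    then show ?thesis using I p by (auto simp: glue_def f_def fun_eq_iff)
  qed
  have fg: "f (glue q) = q" if "q \<in> B" for q
  proof -
    have s1: "oI (fst q) \<subseteq> V1" and s2: "oI (snd q) \<subseteq> V2" using oIsub1 oIsub2 that by auto
    have "part V1 (glue q) = fst q"
    proof (rule part_glue[where \<nu> = "restrict_mult \<mu> V1"])
      show "fst q = None \<or> the (fst q) \<in> inflation V1 (restrict_mult \<mu> V1)"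
        using that by (auto simp: B_def join_carrier_def)
      show "fst (glue q) \<inter> V1 = oI (fst q)" using s1 s2 assms(4) by (auto simp: glue_def)
      show "\<forall>e\<in>edges (oI (fst q)). snd (glue q) e = oC (fst q) e" by (simp add: glue_def)
    qed
    moreover have "part V2 (glue q) = snd q"
    proof (rule part_glue[where \<nu> = "restrict_mult \<mu> V2"])
      show "snd q = None \<or> the (snd q) \<in> inflation V2 (restrict_mult \<mu> V2)"
        using that by (auto simp: B_def join_carrier_def)
      show "fst (glue q) \<inter> V2 = oI (snd q)" using s1 s2 assms(4) by (auto simp: glue_def)
      have "e \<notin> edges (oI (fst q))" if "e \<in> edges (oI (snd q))" for e
        using that s1 s2 assms(4) by (auto simp: edges_def card_2_iff) blast
      then show "\<forall>e\<in>edges (oI (snd q)). snd (glue q) e = oC (snd q) e" by (simp add: glue_def)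
    qed
    ultimately show ?thesis by (simp add: f_def)
  qed
  have bij: "bij_betw f A B"
    by (rule bij_betw_byWitness[where f' = glue]) (use fA gB gf fg in auto)
  have ord: "inflation_le p p' \<longleftrightarrow> join_le inflation_le inflation_le (f p) (f p')"
    if "p \<in> A" "p' \<in> A" for p p'
  proof -
    obtain I c where p: "p = (I, c)" by (cases p)
    obtain I' c' where p': "p' = (I', c')" by (cases p')
    have IV: "I \<subseteq> V1 \<union> V2" using that p assms(3) by (auto simp: A_def inflation_def)
    have "(I \<subseteq> I' \<and> (\<forall>e\<in>edges I. c e = c' e)) \<longleftrightarrow>
      ((I \<inter> V1 \<subseteq> I' \<inter> V1 \<and> (\<forall>e\<in>edges (I \<inter> V1). c e = c' e)) \<and>
       (I \<inter> V2 \<subseteq> I' \<inter> V2 \<and> (\<forall>e\<in>edges (I \<inter> V2). c e = c' e)))" (is "?L \<longleftrightarrow> ?R")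
    proof
      assume ?L then show ?R by (auto simp: edges_Int)
    next
      assume R: ?R
      then have sub: "I \<subseteq> I'" using IV by blast
      have "c e = c' e" if e: "e \<in> edges I" for e
      proof -
        consider "e \<in> edges (I \<inter> V1)" | "e \<in> edges (I \<inter> V2)"
          | u v where "u \<in> V1" "v \<in> V2" "e = {u, v}"
          using edge_cases[OF e IV] e by (auto simp: edges_Int)
        then show ?thesis
        proof cases
          case 3
          then show ?thesis using cross[of I c e u v] cross[of I' c' e u v] \<open>p \<in> A\<close> \<open>p' \<in> A\<close> p p' e
              edges_mono[OF sub e] by simp
        qed (use R in auto)
      qed
      then show ?L using sub by blast
    qed
    then show ?thesis
      unfolding join_le_def f_def fst_conv snd_conv opt_le_part p p' inflation_le_def by simp
  qed
  show ?thesis unfolding poset_iso_def A_def[symmetric] B_def[symmetric]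
    using bij ord by blast
qed

end
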